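(* Let $X$ be a connected, locally path connected space and $x_0\in X$. The following are equivalent: (1) $\pi_1^{wh}(X,x_0)$ is $T_0$; (2) $\pi_1^{wh}(X,x_0)$ is $T_1$; (3) $\pi_1^{wh}(X,x_0)$ is $T_2$; (4) $\pi_1^{wh}(X,x_0)$ is $T_3$ (regular and $T_1$); (5) $\pi^s_1(X,x_0)=1$; (6) $\pi_1^{wh}(X,x_0)$ is totally separated. Moreover, $\pi_1^{wh}(X,x_0)$ is always regular.
   Context: $\pi_1^{wh}(X,x_0)$ denotes $\pi_1(X,x_0)$ with the whisker topology, which has as a basis the sets $[\alpha]\,i_*\pi_1(U,x_0)$ for $[\alpha]\in\pi_1(X,x_0)$ and $U$ an open neighborhood of $x_0$ ($i_*$ induced by inclusion). A loop $\beta$ at $x_0$ is small if for every open neighborhood $U$ of $x_0$ it is homotopic rel endpoints to a loop in $U$; $\pi^s_1(X,x_0)$ is the set of homotopy classes of small loops at $x_0$. A space is totally separated if any two distinct points are separated by a clopen set containing one but not the other. Regular means: a point and a closed set not containing it have disjoint open neighborhoods. *)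

theory Defs
  imports "HOL-Analysis.Analysis"
begin

definition loop_at :: "'a topology \<Rightarrow> 'a \<Rightarrow> (real \<Rightarrow> 'a) \<Rightarrow> bool" where
  "loop_at X x0 p \<longleftrightarrow> pathin X p \<and> p 0 = x0 \<and> p 1 = x0"

definition homotopic_paths_in :: "'a topology \<Rightarrow> (real \<Rightarrow> 'a) \<Rightarrow> (real \<Rightarrow> 'a) \<Rightarrow> bool" where
  "homotopic_paths_in X p q \<longleftrightarrow>
     homotopic_with (\<lambda>r. r 0 = p 0 \<and> r 1 = p 1) (top_of_set {0..1}) X p q"

definition path_join :: "(real \<Rightarrow> 'a) \<Rightarrow> (real \<Rightarrow> 'a) \<Rightarrow> real \<Rightarrow> 'a" where
  "path_join p q = (\<lambda>t. if t \<le> 1/2 then p (2 * t) else q (2 * t - 1))"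

definition loop_class :: "'a topology \<Rightarrow> 'a \<Rightarrow> (real \<Rightarrow> 'a) \<Rightarrow> (real \<Rightarrow> 'a) set" where
  "loop_class X x0 p = {q. loop_at X x0 q \<and> homotopic_paths_in X p q}"

definition fundamental_group :: "'a topology \<Rightarrow> 'a \<Rightarrow> (real \<Rightarrow> 'a) set set" where
  "fundamental_group X x0 = loop_class X x0 ` {p. loop_at X x0 p}"

definition whisker_basis :: "'a topology \<Rightarrow> 'a \<Rightarrow> (real \<Rightarrow> 'a) set set set" where
  "whisker_basis X x0 =
     {{loop_class X x0 (path_join a b) | b. loop_at (subtopology X U) x0 b}
       | a U. loop_at X x0 a \<and> openin X U \<and> x0 \<in> U}"

definition whisker_topology :: "'a topology \<Rightarrow> 'a \<Rightarrow> (real \<Rightarrow> 'a) set topology" where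
  "whisker_topology X x0 = topology_generated_by (whisker_basis X x0)"

definition small_loop :: "'a topology \<Rightarrow> 'a \<Rightarrow> (real \<Rightarrow> 'a) \<Rightarrow> bool" where
  "small_loop X x0 b \<longleftrightarrow> loop_at X x0 b \<and>
     (\<forall>U. openin X U \<and> x0 \<in> U \<longrightarrow>
        (\<exists>c. loop_at (subtopology X U) x0 c \<and> homotopic_paths_in X b c))"

definition small_loop_group :: "'a topology \<Rightarrow> 'a \<Rightarrow> (real \<Rightarrow> 'a) set set" where
  "small_loop_group X x0 = loop_class X x0 ` {b. small_loop X x0 b}"

definition totally_separated_space :: "'a topology \<Rightarrow> bool" where
  "totally_separated_space X \<longleftrightarrow>
     (\<forall>x\<in>topspace X. \<forall>y\<in>topspace X. x \<noteq> y \<longrightarrow>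
        (\<exists>C. closedin X C \<and> openin X C \<and> x \<in> C \<and> y \<notin> C))"

end

theory Submission
  imports Defs
begin



no_notation joinpaths (infixr \<open>+++\<close> 75)
notation path_join (infixr \<open>+++\<close> 75)

definition rp :: "(real \<Rightarrow> 'a) \<Rightarrow> real \<Rightarrow> 'a" where "rp g = (\<lambda>x. g (1 - x))"

lemma cmap_compose_eu:
  assumes "continuous_map (top_of_set A) X h" "continuous_on B m" "m \<in> B \<rightarrow> A"
  shows "continuous_map (top_of_set B) X (h \<circ> m)"
  by (rule continuous_map_compose[OF _ assms(1)]) (use assms in simp)

lemma cmap_paste:
  fixes c :: "'b::topological_space \<Rightarrow> real"
  assumes "continuous_map (top_of_set {x\<in>S. c x \<le> 0}) X f"
    "continuous_map (top_of_set {x\<in>S. 0 \<le> c x}) X g" "continuous_on S c"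
    "\<And>x. x\<in>S \<Longrightarrow> c x = 0 \<Longrightarrow> f x = g x"
  shows "continuous_map (top_of_set S) X (\<lambda>x. if c x \<le> 0 then f x else g x)"
proof (rule continuous_map_cases_le)
  show "continuous_map (top_of_set S) euclideanreal c" using assms(3) by simp
  show "continuous_map (top_of_set S) euclideanreal (\<lambda>x. 0)" by simp
  have "subtopology (top_of_set S) {x \<in> topspace (top_of_set S). c x \<le> 0} = top_of_set {x\<in>S. c x \<le> 0}"
    by (simp add: subtopology_subtopology Int_def)
  then show "continuous_map (subtopology (top_of_set S) {x \<in> topspace (top_of_set S). c x \<le> 0}) X f"
    using assms(1) by simp
  have "subtopology (top_of_set S) {x \<in> topspace (top_of_set S). 0 \<le> c x} = top_of_set {x\<in>S. 0 \<le> c x}"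
    by (simp add: subtopology_subtopology Int_def)
  then show "continuous_map (subtopology (top_of_set S) {x \<in> topspace (top_of_set S). 0 \<le> c x}) X g"
    using assms(2) by simp
qed (use assms(4) in auto)

lemma pathin_join:
  assumes "pathin X p" "pathin X q" "p 1 = q 0"
  shows "pathin X (p +++ q)"
proof -
  have "continuous_map (top_of_set {0..1}) X (\<lambda>x. if x - 1/2 \<le> 0 then (p \<circ> (\<lambda>t. 2*t)) x else (q \<circ> (\<lambda>t. 2*t-1)) x)"
  proof (rule cmap_paste)
    show "continuous_map (top_of_set {x \<in> {0..1}. x - 1/2 \<le> 0}) X (p \<circ> (\<lambda>t. 2*t))"
      using assms(1) unfolding pathin_def by (intro cmap_compose_eu) (auto intro!: continuous_intros)
    show "continuous_map (top_of_set {x \<in> {0..1}. 0 \<le> x - 1/2}) X (q \<circ> (\<lambda>t. 2*t-1))"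
      using assms(2) unfolding pathin_def by (intro cmap_compose_eu) (auto intro!: continuous_intros)
    show "continuous_on {0..1::real} (\<lambda>x. x - 1/2)" by (intro continuous_intros)
    fix x :: real assume "x - 1/2 = 0"
    then have "2*x = 1" "2*x-1 = 0" by auto
    then show "(p \<circ> (\<lambda>t. 2*t)) x = (q \<circ> (\<lambda>t. 2*t-1)) x" using assms(3) by simp
  qed
  moreover have "p +++ q = (\<lambda>x. if x - 1/2 \<le> 0 then (p \<circ> (\<lambda>t. 2*t)) x else (q \<circ> (\<lambda>t. 2*t-1)) x)"
    by (auto simp: fun_eq_iff path_join_def)
  ultimately show ?thesis unfolding pathin_def by simp
qed

lemma pathin_reverse:
  assumes "pathin X p" shows "pathin X (rp p)"
proof -
  have "continuous_on {0..1::real} (\<lambda>t. 1 - t)" by (intro continuous_intros)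
  then show ?thesis
  using assms unfolding pathin_def rp_def
  using cmap_compose_eu[of "{0..1}" X p "{0..1}" "\<lambda>t. 1 - t"]
  by (auto simp: o_def)
qed

lemma hp_pathin: "homotopic_paths_in X p q \<Longrightarrow> pathin X p \<and> pathin X q"
  unfolding homotopic_paths_in_def pathin_def
  using homotopic_with_imp_continuous_maps by blast

lemma hp_ends: "homotopic_paths_in X p q \<Longrightarrow> q 0 = p 0 \<and> q 1 = p 1"
proof -
  assume "homotopic_paths_in X p q"
  then have "(\<lambda>r. r 0 = p 0 \<and> r 1 = p 1) q"
    unfolding homotopic_paths_in_def by (rule homotopic_with_imp_property[THEN conjunct2])
  then show ?thesis by simp
qed


lemma hp_refl: "pathin X p \<Longrightarrow> homotopic_paths_in X p p"
  unfolding homotopic_paths_in_def pathin_def by simp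

lemma hp_sym: assumes "homotopic_paths_in X p q" shows "homotopic_paths_in X q p"
proof -
  have e: "q 0 = p 0" "q 1 = p 1" using hp_ends[OF assms] by auto
  show ?thesis using assms unfolding homotopic_paths_in_def e
    using homotopic_with_sym by blast
qed

lemma hp_trans: assumes "homotopic_paths_in X p q" "homotopic_paths_in X q r"
  shows "homotopic_paths_in X p r"
proof -
  have e: "q 0 = p 0" "q 1 = p 1" using hp_ends[OF assms(1)] by auto
  show ?thesis using assms unfolding homotopic_paths_in_def e
    using homotopic_with_trans by blast
qed

lemma hp_reparam:
  assumes p: "pathin X p" and cf: "continuous_on {0..1} f" and cg: "continuous_on {0..1} g"
    and fi: "f \<in> {0..1} \<rightarrow> {0..1}" and gi: "g \<in> {0..1} \<rightarrow> {0..1}"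
    and e0: "f 0 = g 0" and e1: "f 1 = g 1"
  shows "homotopic_paths_in X (p \<circ> f) (p \<circ> g)"
proof -
  have "homotopic_paths {0..1} f g"
  proof (rule homotopic_paths_linear)
    show "path f" "path g" using cf cg by (simp_all add: path_def)
    show "pathstart g = pathstart f" "pathfinish g = pathfinish f"
      using e0 e1 by (simp_all add: pathstart_def pathfinish_def)
    fix t :: real assume "t \<in> {0..1}"
    then show "closed_segment (f t) (g t) \<subseteq> {0..1}"
      using fi gi by (intro closed_segment_subset) auto
  qed
  then have h: "homotopic_with (\<lambda>r. r 0 = f 0 \<and> r 1 = f 1) (top_of_set {0..1}) (top_of_set {0..1}) f g"
    unfolding homotopic_paths_def pathstart_def pathfinish_def by simp
  show ?thesis unfolding homotopic_paths_in_def
    by (rule homotopic_with_compose_continuous_map_left[OF h]) (use p in \<open>auto simp: pathin_def\<close>)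
qed

lemma hp_reparam_id:
  assumes p: "pathin X p" and cf: "continuous_on {0..1} f"
    and fi: "f \<in> {0..1} \<rightarrow> {0..1}" and e0: "f 0 = 0" and e1: "f 1 = 1"
    and q: "q = p \<circ> f"
  shows "homotopic_paths_in X q p"
  using hp_reparam[OF p cf continuous_on_id fi _ e0 e1] q by (simp add: o_def)

lemma hp_lid:
  assumes p: "pathin X p" and "p 0 = a"
  shows "homotopic_paths_in X ((\<lambda>t. a) +++ p) p"
proof (rule hp_reparam_id[OF p, where f="\<lambda>t. if t \<le> 1/2 then 0 else 2*t-1"])
  show "continuous_on {0..1} (\<lambda>t::real. if t \<le> 1/2 then 0 else 2*t-1)"
    by (rule continuous_on_cases_1 continuous_intros | force)+
  show "(\<lambda>t::real. if t \<le> 1/2 then 0 else 2*t-1) \<in> {0..1} \<rightarrow> {0..1}" by auto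
  show "(\<lambda>t. a) +++ p = p \<circ> (\<lambda>t. if t \<le> 1/2 then 0 else 2*t-1)"
    using assms(2) by (auto simp: fun_eq_iff path_join_def)
qed auto

lemma hp_rid:
  assumes p: "pathin X p" and "p 1 = a"
  shows "homotopic_paths_in X (p +++ (\<lambda>t. a)) p"
proof (rule hp_reparam_id[OF p, where f="\<lambda>t. if t \<le> 1/2 then 2*t else 1"])
  show "continuous_on {0..1} (\<lambda>t::real. if t \<le> 1/2 then 2*t else 1)"
    by (rule continuous_on_cases_1 continuous_intros | force)+
  show "(\<lambda>t::real. if t \<le> 1/2 then 2*t else 1) \<in> {0..1} \<rightarrow> {0..1}" by auto
  show "p +++ (\<lambda>t. a) = p \<circ> (\<lambda>t. if t \<le> 1/2 then 2*t else 1)"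
    using assms(2) by (auto simp: fun_eq_iff path_join_def)
qed auto

lemma hp_assoc:
  assumes p: "pathin X p" and q: "pathin X q" and r: "pathin X r"
    and pq: "p 1 = q 0" and qr: "q 1 = r 0"
  shows "homotopic_paths_in X ((p +++ q) +++ r) (p +++ (q +++ r))"
proof (rule hp_reparam_id[where f="\<lambda>t. if t \<le> 1/4 then 2*t else if t \<le> 1/2 then t + 1/4 else (t+1)/2"])
  show "pathin X (p +++ (q +++ r))"
    using p q r pq qr by (intro pathin_join) (auto simp: path_join_def)
  show "continuous_on {0..1} (\<lambda>t::real. if t \<le> 1/4 then 2*t else if t \<le> 1/2 then t + 1/4 else (t+1)/2)"
    by (rule continuous_on_cases_1 continuous_intros | force)+
  show "(\<lambda>t::real. if t \<le> 1/4 then 2*t else if t \<le> 1/2 then t + 1/4 else (t+1)/2) \<in> {0..1} \<rightarrow> {0..1}" by auto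
  show "(p +++ q) +++ r = (p +++ (q +++ r)) \<circ> (\<lambda>t. if t \<le> 1/4 then 2*t else if t \<le> 1/2 then t + 1/4 else (t+1)/2)"
    by (auto simp: fun_eq_iff path_join_def field_simps) (auto intro!: arg_cong[where f=q] arg_cong[where f=r])
qed auto

lemma hp_rinv:
  assumes p: "pathin X p"
  shows "homotopic_paths_in X (p +++ rp p) (\<lambda>t. p 0)"
proof -
  have "homotopic_paths_in X (p \<circ> (\<lambda>t. if t \<le> 1/2 then 2*t else 2 - 2*t)) (p \<circ> (\<lambda>t. 0))"
  proof (rule hp_reparam[OF p])
    show "continuous_on {0..1} (\<lambda>t::real. if t \<le> 1/2 then 2*t else 2 - 2*t)"
      by (rule continuous_on_cases_1 continuous_intros | force)+
  qed auto
  moreover have "p +++ rp p = p \<circ> (\<lambda>t. if t \<le> 1/2 then 2*t else 2 - 2*t)"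
    by (auto simp: fun_eq_iff path_join_def rp_def)
  ultimately show ?thesis by (simp add: o_def)
qed

lemma hp_linv:
  assumes p: "pathin X p"
  shows "homotopic_paths_in X (rp p +++ p) (\<lambda>t. p 1)"
proof -
  have "homotopic_paths_in X (p \<circ> (\<lambda>t. if t \<le> 1/2 then 1 - 2*t else 2*t - 1)) (p \<circ> (\<lambda>t. 1))"
  proof (rule hp_reparam[OF p])
    show "continuous_on {0..1} (\<lambda>t::real. if t \<le> 1/2 then 1 - 2*t else 2*t - 1)"
      by (rule continuous_on_cases_1 continuous_intros | force)+
  qed auto
  moreover have "rp p +++ p = p \<circ> (\<lambda>t. if t \<le> 1/2 then 1 - 2*t else 2*t - 1)"
    by (auto simp: fun_eq_iff path_join_def rp_def)
  ultimately show ?thesis by (simp add: o_def)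
qed



lemma hp_join:
  assumes hpp: "homotopic_paths_in X p p'" and hqq: "homotopic_paths_in X q q'" and pq: "p 1 = q 0"
  shows "homotopic_paths_in X (p +++ q) (p' +++ q')"
proof -
  let ?S = "{0..1::real} \<times> {0..1::real}"
  obtain H where Hc: "continuous_map (top_of_set ?S) X H"
    and H0: "\<And>x. H(0,x) = p x" and H1: "\<And>x. H(1,x) = p' x"
    and Hp: "\<And>t. t \<in> {0..1} \<Longrightarrow> H(t,0) = p 0 \<and> H(t,1) = p 1"
    using hpp unfolding homotopic_paths_in_def homotopic_with_def by auto
  obtain K where Kc: "continuous_map (top_of_set ?S) X K"
    and K0: "\<And>x. K(0,x) = q x" and K1: "\<And>x. K(1,x) = q' x"
    and Kp: "\<And>t. t \<in> {0..1} \<Longrightarrow> K(t,0) = q 0 \<and> K(t,1) = q 1"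
    using hqq unfolding homotopic_paths_in_def homotopic_with_def by auto
  define L where "L = (\<lambda>y. if snd y - 1/2 \<le> 0 then (H \<circ> (\<lambda>y. (fst y, 2 * snd y))) y
                      else (K \<circ> (\<lambda>y. (fst y, 2 * snd y - 1))) y)"
  have Lc: "continuous_map (top_of_set ?S) X L"
    unfolding L_def
  proof (rule cmap_paste)
    show "continuous_map (top_of_set {x \<in> ?S. snd x - 1/2 \<le> 0}) X (H \<circ> (\<lambda>y. (fst y, 2 * snd y)))"
      by (rule cmap_compose_eu[OF Hc]) (auto intro!: continuous_intros)
    show "continuous_map (top_of_set {x \<in> ?S. 0 \<le> snd x - 1/2}) X (K \<circ> (\<lambda>y. (fst y, 2 * snd y - 1)))"
      by (rule cmap_compose_eu[OF Kc]) (auto intro!: continuous_intros)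
    show "continuous_on ?S (\<lambda>x. snd x - 1/2)" by (intro continuous_intros)
    fix x :: "real \<times> real" assume x: "x \<in> ?S" "snd x - 1/2 = 0"
    then have e: "2 * snd x = 1" "2 * snd x - 1 = 0" by auto
    show "(H \<circ> (\<lambda>y. (fst y, 2 * snd y))) x = (K \<circ> (\<lambda>y. (fst y, 2 * snd y - 1))) x"
      unfolding o_def e using Hp[of "fst x"] Kp[of "fst x"] x pq by (auto simp: mem_Times_iff)
  qed
  show ?thesis
    unfolding homotopic_paths_in_def homotopic_with_def
  proof (intro exI conjI allI ballI)
    show "continuous_map (prod_topology (top_of_set {0..1}) (top_of_set {0..1})) X L"
      using Lc by simp
    fix x :: real
    show "L (0, x) = (p +++ q) x" by (simp add: L_def path_join_def H0 K0)
    show "L (1, x) = (p' +++ q') x" by (simp add: L_def path_join_def H1 K1)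
  next
    fix t :: real assume t: "t \<in> {0..1}"
    show "L (t, 0) = (p +++ q) 0" "L (t, 1) = (p +++ q) 1"
      using Hp[OF t] Kp[OF t] by (simp_all add: L_def path_join_def)
  qed
qed



lemma loop_join_gen: assumes "loop_at Y x0 a" "loop_at Y x0 b" shows "loop_at Y x0 (a +++ b)"
proof -
  have "pathin Y (a+++b)" using assms by (intro pathin_join) (auto simp: loop_at_def)
  then show ?thesis using assms by (simp add: loop_at_def path_join_def)
qed

locale wh =
  fixes X :: "'a topology" and x0 :: 'a
  assumes x0: "x0 \<in> topspace X"
begin

abbreviation "lp \<equiv> loop_at X x0"
abbreviation "lpU U \<equiv> loop_at (subtopology X U) x0"
abbreviation "cl \<equiv> loop_class X x0"
abbreviation "hpp \<equiv> homotopic_paths_in X"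
abbreviation "e \<equiv> (\<lambda>t::real. x0)"

definition N where "N a U = {cl (a +++ b) | b. lpU U b}"

lemma lp_pathin: "lp a \<Longrightarrow> pathin X a" by (simp add: loop_at_def)

lemma lp_e: "lp e" using x0 by (simp add: loop_at_def)

lemma lpU_e: "x0 \<in> U \<Longrightarrow> lpU U e" using x0 by (simp add: loop_at_def)

lemma lpU_lp: "lpU U b \<Longrightarrow> lp b" by (simp add: loop_at_def pathin_subtopology)

lemma lpU_mono: "lpU V b \<Longrightarrow> V \<subseteq> U \<Longrightarrow> lpU U b" by (auto simp: loop_at_def pathin_subtopology)

lemma lp_join: "lp a \<Longrightarrow> lp b \<Longrightarrow> lp (a +++ b)"
  by (rule loop_join_gen)

lemma lpU_join: "lpU U a \<Longrightarrow> lpU U b \<Longrightarrow> lpU U (a +++ b)"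
  by (rule loop_join_gen)

lemma lpU_rev: "lpU U a \<Longrightarrow> lpU U (rp a)"
  by (auto simp: loop_at_def rp_def intro!: pathin_reverse[unfolded rp_def])

lemma lp_rev: "lp a \<Longrightarrow> lp (rp a)"
  by (auto simp: loop_at_def rp_def intro!: pathin_reverse[unfolded rp_def])

lemma cl_eq: assumes "lp p" "lp q" shows "cl p = cl q \<longleftrightarrow> hpp p q"
proof
  assume "cl p = cl q"
  moreover have "p \<in> cl p" using assms(1) by (simp add: loop_class_def hp_refl lp_pathin)
  ultimately show "hpp p q" by (auto simp: loop_class_def intro: hp_sym)
next
  assume "hpp p q"
  then show "cl p = cl q" unfolding loop_class_def using hp_sym hp_trans by blast
qed

lemma hp_joinl: "hpp p p' \<Longrightarrow> lp q \<Longrightarrow> lp p \<Longrightarrow> hpp (p +++ q) (p' +++ q)"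
  by (rule hp_join) (auto simp: loop_at_def intro: hp_refl)

lemma hp_joinr: "hpp q q' \<Longrightarrow> lp q \<Longrightarrow> lp p \<Longrightarrow> hpp (p +++ q) (p +++ q')"
  by (rule hp_join) (auto simp: loop_at_def intro: hp_refl)

lemma lp_assoc: "lp p \<Longrightarrow> lp q \<Longrightarrow> lp r \<Longrightarrow> hpp ((p +++ q) +++ r) (p +++ (q +++ r))"
  by (rule hp_assoc) (auto simp: loop_at_def)

lemma lp_lid: "lp p \<Longrightarrow> hpp (e +++ p) p"
  by (rule hp_lid) (auto simp: loop_at_def)

lemma lp_rid: "lp p \<Longrightarrow> hpp (p +++ e) p"
  by (rule hp_rid) (auto simp: loop_at_def)

lemma lp_rinv: "lp p \<Longrightarrow> hpp (p +++ rp p) e"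
  using hp_rinv[of X p] by (auto simp: loop_at_def)

lemma lp_linv: "lp p \<Longrightarrow> hpp (rp p +++ p) e"
  using hp_linv[of X p] by (auto simp: loop_at_def)

end




declare hp_trans [trans]

context wh begin

lemma cl_mem_N: "lp a \<Longrightarrow> x0 \<in> U \<Longrightarrow> cl a \<in> N a U"
  unfolding N_def using cl_eq[of a "a +++ e"] lp_rid[of a] lpU_e[of U] lp_e lp_join
  by (metis (mono_tags, lifting) hp_sym mem_Collect_eq)

lemma N_elem: "g \<in> N a U \<Longrightarrow> \<exists>b. lpU U b \<and> g = cl (a +++ b)"
  unfolding N_def by blast

lemma N_eq:
  assumes a: "lp a" and a': "lp a'" and U: "x0 \<in> U" and m: "cl a' \<in> N a U"
  shows "N a' U = N a U"
proof -
  obtain b where b: "lpU U b" and eq: "cl a' = cl (a +++ b)" using N_elem[OF m] by blast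
  have lb: "lp b" using b lpU_lp by blast
  have h: "hpp (a +++ b) a'" using eq cl_eq[of a' "a +++ b"] a a' lb lp_join hp_sym by blast
  show ?thesis
  proof
    show "N a' U \<subseteq> N a U"
    proof
      fix g assume "g \<in> N a' U"
      then obtain c where c: "lpU U c" and g: "g = cl (a' +++ c)" using N_elem by blast
      have lc: "lp c" using c lpU_lp by blast
      have "hpp (a' +++ c) ((a +++ b) +++ c)"
        using hp_joinl[OF hp_sym[OF h] lc a'] .
      moreover have "hpp ((a +++ b) +++ c) (a +++ (b +++ c))" using lp_assoc a lb lc by blast
      ultimately have "cl (a' +++ c) = cl (a +++ (b +++ c))"
        using cl_eq hp_trans a' lc a lb lp_join by metis
      then show "g \<in> N a U" unfolding N_def g using lpU_join[OF b c] by blast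
    qed
  next
    show "N a U \<subseteq> N a' U"
    proof
      fix g assume "g \<in> N a U"
      then obtain c where c: "lpU U c" and g: "g = cl (a +++ c)" using N_elem by blast
      have lc: "lp c" using c lpU_lp by blast
      have lrb: "lp (rp b)" using lp_rev[OF lb] .
      have d: "lpU U (rp b +++ c)" using lpU_join[OF lpU_rev[OF b] c] .
      have "hpp (a' +++ (rp b +++ c)) ((a +++ b) +++ (rp b +++ c))"
        using hp_joinl[OF hp_sym[OF h]] lp_join[OF lrb lc] a' by blast
      also have "hpp ((a +++ b) +++ (rp b +++ c)) (a +++ (b +++ (rp b +++ c)))"
        using lp_assoc a lb lp_join[OF lrb lc] by blast
      also have "hpp (a +++ (b +++ (rp b +++ c))) (a +++ ((b +++ rp b) +++ c))"
        using hp_joinr[OF hp_sym[OF lp_assoc[OF lb lrb lc]]] a lb lrb lc lp_join by blast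
      also have "hpp (a +++ ((b +++ rp b) +++ c)) (a +++ (e +++ c))"
        using hp_joinr[OF hp_joinl[OF lp_rinv[OF lb]]] a lb lrb lc lp_join by blast
      also have "hpp (a +++ (e +++ c)) (a +++ c)"
        using hp_joinr[OF lp_lid[OF lc]] a lc lp_e lp_join by blast
      finally have "hpp (a' +++ (rp b +++ c)) (a +++ c)" .
      then have "cl (a +++ c) = cl (a' +++ (rp b +++ c))"
        using cl_eq hp_sym a' lc a lp_join lrb by metis
      then show "g \<in> N a' U" unfolding N_def g using d by blast
    qed
  qed
qed

lemma N_eq2: "lp a \<Longrightarrow> lp a' \<Longrightarrow> x0 \<in> U \<Longrightarrow> cl a = cl a' \<Longrightarrow> N a U = N a' U"
  using N_eq cl_mem_N by metis

lemma N_mono: "V \<subseteq> U \<Longrightarrow> N a V \<subseteq> N a U"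
  unfolding N_def using lpU_mono by blast

end



lemma clopen_base_regular:
  assumes cb: "\<And>S g. openin T S \<Longrightarrow> g \<in> S \<Longrightarrow> \<exists>C. closedin T C \<and> openin T C \<and> g \<in> C \<and> C \<subseteq> S"
  shows "regular_space T"
  unfolding regular_space_def
proof (intro allI impI)
  fix C g assume "closedin T C \<and> g \<in> topspace T - C"
  then have C: "closedin T C" and g: "g \<in> topspace T" "g \<notin> C" by auto
  have "openin T (topspace T - C)" using C by (simp add: closedin_def)
  then obtain D where D: "closedin T D" "openin T D" "g \<in> D" "D \<subseteq> topspace T - C"
    using cb g by blast
  show "\<exists>U V. openin T U \<and> openin T V \<and> g \<in> U \<and> C \<subseteq> V \<and> disjnt U V"
  proof (intro exI conjI)
    show "openin T D" "g \<in> D" by fact+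
    show "openin T (topspace T - D)" using D(1) by (simp add: closedin_def)
    show "C \<subseteq> topspace T - D" using D(4) closedin_subset[OF C] by blast
    show "disjnt D (topspace T - D)" by (simp add: disjnt_def)
  qed
qed

lemma clopen_base_t0_totsep:
  assumes cb: "\<And>S g. openin T S \<Longrightarrow> g \<in> S \<Longrightarrow> \<exists>C. closedin T C \<and> openin T C \<and> g \<in> C \<and> C \<subseteq> S"
    and t0: "t0_space T"
  shows "totally_separated_space T"
  unfolding totally_separated_space_def
proof (intro ballI impI)
  fix x y assume x: "x \<in> topspace T" and y: "y \<in> topspace T" and xy: "x \<noteq> y"
  obtain U where U: "openin T U" "x \<notin> U \<longleftrightarrow> y \<in> U" using t0 x y xy unfolding t0_space_def by blast
  show "\<exists>C. closedin T C \<and> openin T C \<and> x \<in> C \<and> y \<notin> C"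
  proof (cases "x \<in> U")
    case True
    then obtain C where "closedin T C" "openin T C" "x \<in> C" "C \<subseteq> U" using cb U(1) by blast
    then show ?thesis using U(2) True by blast
  next
    case False
    then have "y \<in> U" using U(2) by blast
    then obtain C where C: "closedin T C" "openin T C" "y \<in> C" "C \<subseteq> U" using cb U(1) by blast
    show ?thesis
    proof (intro exI conjI)
      show "closedin T (topspace T - C)" using C(2) by (simp add: closedin_diff)
      show "openin T (topspace T - C)" using C(1) by (simp add: closedin_def)
      show "x \<in> topspace T - C" using x False C(4) by blast
      show "y \<notin> topspace T - C" using C(3) by blast
    qed
  qed
qed

lemma totsep_Hausdorff: "totally_separated_space T \<Longrightarrow> Hausdorff_space T"
  unfolding totally_separated_space_def Hausdorff_space_def
proof (intro allI impI)
  fix x y assume a: "\<forall>x\<in>topspace T. \<forall>y\<in>topspace T. x \<noteq> y \<longrightarrow> (\<exists>C. closedin T C \<and> openin T C \<and> x \<in> C \<and> y \<notin> C)"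
    and b: "x \<in> topspace T \<and> y \<in> topspace T \<and> x \<noteq> y"
  then obtain C where C: "closedin T C" "openin T C" "x \<in> C" "y \<notin> C" by blast
  show "\<exists>U V. openin T U \<and> openin T V \<and> x \<in> U \<and> y \<in> V \<and> disjnt U V"
  proof (intro exI conjI)
    show "openin T C" "x \<in> C" by fact+
    show "openin T (topspace T - C)" using C(1) by (simp add: closedin_def)
    show "y \<in> topspace T - C" using b C(4) by blast
    show "disjnt C (topspace T - C)" by (simp add: disjnt_def)
  qed
qed



context wh begin

abbreviation "W \<equiv> whisker_topology X x0"

lemma basis_eq: "whisker_basis X x0 = {N a U | a U. lp a \<and> openin X U \<and> x0 \<in> U}"
  by (simp add: whisker_basis_def N_def)

lemma N_sub_G: "lp a \<Longrightarrow> N a U \<subseteq> fundamental_group X x0"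
proof
  fix g assume "lp a" "g \<in> N a U"
  then obtain b where "lpU U b" "g = cl (a +++ b)" using N_elem by blast
  then show "g \<in> fundamental_group X x0"
    unfolding fundamental_group_def using lp_join[OF \<open>lp a\<close> lpU_lp] by blast
qed

lemma topspace_W: "topspace W = fundamental_group X x0"
proof
  show "topspace W \<subseteq> fundamental_group X x0"
    unfolding whisker_topology_def topology_generated_by_topspace basis_eq using N_sub_G by blast
  show "fundamental_group X x0 \<subseteq> topspace W"
  proof
    fix g assume "g \<in> fundamental_group X x0"
    then obtain a where a: "lp a" "g = cl a" unfolding fundamental_group_def by blast
    then have "g \<in> N a (topspace X)" using cl_mem_N x0 by blast
    then show "g \<in> topspace W"
      unfolding whisker_topology_def topology_generated_by_topspace basis_eq using a x0 by blast
  qed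
qed

lemma N_open: "lp a \<Longrightarrow> openin X U \<Longrightarrow> x0 \<in> U \<Longrightarrow> openin W (N a U)"
  unfolding whisker_topology_def by (rule topology_generated_by_Basis) (auto simp: basis_eq)

lemma nbhd_gen:
  "generate_topology_on (whisker_basis X x0) S \<Longrightarrow>
     \<forall>g\<in>S. \<exists>a U. lp a \<and> openin X U \<and> x0 \<in> U \<and> g = cl a \<and> N a U \<subseteq> S"
proof (induction rule: generate_topology_on.induct)
  case Empty
  then show ?case by simp
next
  case (Int s t)
  show ?case
  proof
    fix g assume g: "g \<in> s \<inter> t"
    obtain a1 U1 where 1: "lp a1" "openin X U1" "x0 \<in> U1" "g = cl a1" "N a1 U1 \<subseteq> s"
      using Int.IH(1) g by blast
    obtain a2 U2 where 2: "lp a2" "openin X U2" "x0 \<in> U2" "g = cl a2" "N a2 U2 \<subseteq> t"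
      using Int.IH(2) g by blast
    have "N a1 (U1 \<inter> U2) \<subseteq> s" using N_mono[of "U1 \<inter> U2" U1 a1] 1 by blast
    moreover have "N a1 U2 = N a2 U2" using N_eq2[OF 1(1) 2(1) 2(3)] 1(4) 2(4) by simp
    then have "N a1 (U1 \<inter> U2) \<subseteq> t" using N_mono[of "U1 \<inter> U2" U2 a1] 2(5) by blast
    ultimately have "N a1 (U1 \<inter> U2) \<subseteq> s \<inter> t" by blast
    moreover have "openin X (U1 \<inter> U2)" using 1(2) 2(2) by (rule openin_Int)
    ultimately show "\<exists>a U. lp a \<and> openin X U \<and> x0 \<in> U \<and> g = cl a \<and> N a U \<subseteq> s \<inter> t"
      using 1(1,3,4) 2(3) by (intro exI[of _ a1] exI[of _ "U1 \<inter> U2"]) simp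
  qed
next
  case (UN K)
  show ?case
  proof
    fix g assume "g \<in> \<Union>K"
    then obtain k where k: "k \<in> K" "g \<in> k" by blast
    obtain a U where aU: "lp a" "openin X U" "x0 \<in> U" "g = cl a" "N a U \<subseteq> k"
      using UN.IH[OF k(1)] k(2) by blast
    have "N a U \<subseteq> \<Union>K" using aU(5) k(1) by blast
    then show "\<exists>a U. lp a \<and> openin X U \<and> x0 \<in> U \<and> g = cl a \<and> N a U \<subseteq> \<Union>K"
      using aU by (intro exI[of _ a] exI[of _ U]) simp
  qed
next
  case (Basis s)
  then obtain a U where s: "s = N a U" "lp a" "openin X U" "x0 \<in> U" by (auto simp: basis_eq)
  show ?case
  proof
    fix g assume g: "g \<in> s"
    then obtain b where b: "lpU U b" "g = cl (a +++ b)" using N_elem s by blast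
    have l: "lp (a +++ b)" using lp_join s(2) lpU_lp b(1) by blast
    have "N (a +++ b) U = N a U" using N_eq[OF s(2) l s(4)] g b s by simp
    then show "\<exists>a U. lp a \<and> openin X U \<and> x0 \<in> U \<and> g = cl a \<and> N a U \<subseteq> s"
      using l s b by (intro exI[of _ "a +++ b"] exI[of _ U]) simp
  qed
qed

lemma nbhd: "openin W S \<Longrightarrow> g \<in> S \<Longrightarrow> \<exists>a U. lp a \<and> openin X U \<and> x0 \<in> U \<and> g = cl a \<and> N a U \<subseteq> S"
  unfolding whisker_topology_def openin_topology_generated_by_iff using nbhd_gen by blast

lemma N_closed:
  assumes a: "lp a" and U: "openin X U" "x0 \<in> U"
  shows "closedin W (N a U)"
proof -
  have eq: "topspace W - N a U = \<Union>{N a' U | a'. lp a' \<and> cl a' \<notin> N a U}"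
  proof
    show "topspace W - N a U \<subseteq> \<Union>{N a' U | a'. lp a' \<and> cl a' \<notin> N a U}"
    proof
      fix g assume g: "g \<in> topspace W - N a U"
      then obtain a' where a': "lp a'" "g = cl a'" unfolding topspace_W fundamental_group_def by blast
      then have "g \<in> N a' U" using cl_mem_N U by blast
      then show "g \<in> \<Union>{N a' U | a'. lp a' \<and> cl a' \<notin> N a U}" using a' g by blast
    qed
    show "\<Union>{N a' U | a'. lp a' \<and> cl a' \<notin> N a U} \<subseteq> topspace W - N a U"
    proof
      fix h assume "h \<in> \<Union>{N a' U | a'. lp a' \<and> cl a' \<notin> N a U}"
      then obtain a' where a': "lp a'" "cl a' \<notin> N a U" "h \<in> N a' U" by blast
      have "h \<in> topspace W" using N_sub_G[OF a'(1)] a'(3) topspace_W by blast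
      moreover have "h \<notin> N a U"
      proof
        assume hN: "h \<in> N a U"
        obtain b where b: "lpU U b" "h = cl (a' +++ b)" using N_elem a'(3) by blast
        have l: "lp (a' +++ b)" using lp_join a'(1) lpU_lp b(1) by blast
        have "N (a' +++ b) U = N a' U" using N_eq[OF a'(1) l U(2)] a'(3) b by simp
        moreover have "N (a' +++ b) U = N a U" using N_eq[OF a l U(2)] hN b by simp
        ultimately show False using cl_mem_N[OF a'(1) U(2)] a'(2) by simp
      qed
      ultimately show "h \<in> topspace W - N a U" by blast
    qed
  qed
  have "openin W (topspace W - N a U)"
    unfolding eq using N_open U by (intro openin_Union) auto
  moreover have "N a U \<subseteq> topspace W" using N_sub_G[OF a] topspace_W by simp
  ultimately show ?thesis by (simp add: closedin_def)
qed

lemma clopen_base: "openin W S \<Longrightarrow> g \<in> S \<Longrightarrow> \<exists>C. closedin W C \<and> openin W C \<and> g \<in> C \<and> C \<subseteq> S"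
proof -
  assume "openin W S" "g \<in> S"
  then obtain a U where aU: "lp a" "openin X U" "x0 \<in> U" "g = cl a" "N a U \<subseteq> S" using nbhd by blast
  show ?thesis
    using N_open[OF aU(1-3)] N_closed[OF aU(1-3)] cl_mem_N[OF aU(1,3)] aU(4,5) by blast
qed

end



context wh begin

lemma e_small: "small_loop X x0 e"
  unfolding small_loop_def using lp_e lpU_e hp_refl lp_pathin by blast

lemma small_N:
  assumes b: "small_loop X x0 b" and U: "openin X U" "x0 \<in> U"
  shows "N b U = N e U"
proof -
  have lb: "lp b" using b by (simp add: small_loop_def)
  obtain c where c: "lpU U c" "hpp b c" using b U unfolding small_loop_def by blast
  have lc: "lp c" using c(1) lpU_lp by blast
  have "cl (e +++ c) = cl c" using cl_eq lp_lid[OF lc] lp_join[OF lp_e lc] lc by blast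
  also have "\<dots> = cl b" using cl_eq[OF lb lc] c(2) by simp
  finally have "cl b \<in> N e U" unfolding N_def using c(1) by blast
  then show ?thesis using N_eq[OF lp_e lb U(2)] by simp
qed

lemma t0_imp_small:
  assumes t0: "t0_space W"
  shows "small_loop_group X x0 = {cl e}"
proof
  show "{cl e} \<subseteq> small_loop_group X x0"
    unfolding small_loop_group_def using e_small by blast
  show "small_loop_group X x0 \<subseteq> {cl e}"
  proof
    fix x assume "x \<in> small_loop_group X x0"
    then obtain b where b: "small_loop X x0 b" "x = cl b" unfolding small_loop_group_def by blast
    have lb: "lp b" using b(1) by (simp add: small_loop_def)
    have "cl b = cl e"
    proof (rule ccontr)
      assume ne: "cl b \<noteq> cl e"
      have inb: "cl b \<in> topspace W" "cl e \<in> topspace W"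
        unfolding topspace_W fundamental_group_def using lb lp_e by auto
      obtain V where V: "openin W V" "cl b \<notin> V \<longleftrightarrow> cl e \<in> V"
        using t0 inb ne unfolding t0_space_def by blast
      show False
      proof (cases "cl e \<in> V")
        case True
        obtain a U where aU: "lp a" "openin X U" "x0 \<in> U" "cl e = cl a" "N a U \<subseteq> V"
          using nbhd[OF V(1) True] by blast
        have "N a U = N e U" using N_eq2[OF aU(1) lp_e aU(3)] aU(4) by simp
        moreover have "cl b \<in> N b U" using cl_mem_N[OF lb aU(3)] .
        ultimately have "cl b \<in> V" using small_N[OF b(1) aU(2,3)] aU(5) by blast
        then show False using V(2) True by blast
      next
        case False
        then have bV: "cl b \<in> V" using V(2) by blast
        obtain a U where aU: "lp a" "openin X U" "x0 \<in> U" "cl b = cl a" "N a U \<subseteq> V"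
          using nbhd[OF V(1) bV] by blast
        have "N a U = N b U" using N_eq2[OF aU(1) lb aU(3)] aU(4) by simp
        moreover have "cl e \<in> N e U" using cl_mem_N[OF lp_e aU(3)] .
        ultimately have "cl e \<in> V" using small_N[OF b(1) aU(2,3)] aU(5) by blast
        then show False using False by blast
      qed
    qed
    then show "x \<in> {cl e}" using b(2) by simp
  qed
qed

lemma small_imp_t0:
  assumes sm: "small_loop_group X x0 = {cl e}"
  shows "t0_space W"
  unfolding t0_space_def
proof (intro ballI impI)
  fix g h assume g: "g \<in> topspace W" and h: "h \<in> topspace W" and gh: "g \<noteq> h"
  obtain a where a: "lp a" "g = cl a" using g unfolding topspace_W fundamental_group_def by blast
  obtain a' where a': "lp a'" "h = cl a'" using h unfolding topspace_W fundamental_group_def by blast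
  show "\<exists>V. openin W V \<and> (g \<notin> V \<longleftrightarrow> h \<in> V)"
  proof (rule ccontr)
    assume nV: "\<not> (\<exists>V. openin W V \<and> (g \<notin> V \<longleftrightarrow> h \<in> V))"
    have mem: "cl a' \<in> N a U" if U: "openin X U" "x0 \<in> U" for U
    proof -
      have "g \<in> N a U" using cl_mem_N[OF a(1) U(2)] a(2) by simp
      then show ?thesis using nV N_open[OF a(1) U] a'(2) by blast
    qed
    have lra: "lp (rp a)" using lp_rev[OF a(1)] .
    have la: "lp (rp a +++ a')" using lp_join[OF lra a'(1)] .
    have "small_loop X x0 (rp a +++ a')"
      unfolding small_loop_def
    proof (intro conjI allI impI)
      show "lp (rp a +++ a')" by fact
      fix U assume U: "openin X U \<and> x0 \<in> U"
      obtain b where b: "lpU U b" "cl a' = cl (a +++ b)" using N_elem mem U by blast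
      have lb: "lp b" using b(1) lpU_lp by blast
      have h1: "hpp (a +++ b) a'" using cl_eq[OF a'(1) lp_join[OF a(1) lb]] b(2) hp_sym by blast
      have "hpp (rp a +++ a') (rp a +++ (a +++ b))"
        using hp_joinr[OF hp_sym[OF h1] a'(1) lra] .
      also have "hpp (rp a +++ (a +++ b)) ((rp a +++ a) +++ b)"
        using hp_sym[OF lp_assoc[OF lra a(1) lb]] .
      also have "hpp ((rp a +++ a) +++ b) (e +++ b)"
        using hp_joinl[OF lp_linv[OF a(1)] lb lp_join[OF lra a(1)]] .
      also have "hpp (e +++ b) b" using lp_lid[OF lb] .
      finally show "\<exists>c. lpU U c \<and> hpp (rp a +++ a') c" using b(1) by blast
    qed
    then have "cl (rp a +++ a') \<in> {cl e}" using sm unfolding small_loop_group_def by blast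
    then have he: "hpp (rp a +++ a') e" using cl_eq[OF la lp_e] by simp
    have "hpp a (a +++ e)" using hp_sym[OF lp_rid[OF a(1)]] .
    also have "hpp (a +++ e) (a +++ (rp a +++ a'))"
      using hp_joinr[OF hp_sym[OF he] lp_e a(1)] .
    also have "hpp (a +++ (rp a +++ a')) ((a +++ rp a) +++ a')"
      using hp_sym[OF lp_assoc[OF a(1) lra a'(1)]] .
    also have "hpp ((a +++ rp a) +++ a') (e +++ a')"
      using hp_joinl[OF lp_rinv[OF a(1)] a'(1) lp_join[OF a(1) lra]] .
    also have "hpp (e +++ a') a'" using lp_lid[OF a'(1)] .
    finally have "cl a = cl a'" using cl_eq[OF a(1) a'(1)] by simp
    then show False using gh a(2) a'(2) by simp
  qed
qed

end

theorem proposition3p3: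
  fixes X :: "'a topology" and x0 :: 'a
  assumes "connected_space X" and "locally_path_connected_space X" and "x0 \<in> topspace X"
  shows "(t0_space (whisker_topology X x0) \<longleftrightarrow> t1_space (whisker_topology X x0))
       \<and> (t0_space (whisker_topology X x0) \<longleftrightarrow> Hausdorff_space (whisker_topology X x0))
       \<and> (t0_space (whisker_topology X x0) \<longleftrightarrow>
            regular_space (whisker_topology X x0) \<and> t1_space (whisker_topology X x0))
       \<and> (t0_space (whisker_topology X x0) \<longleftrightarrow>
            small_loop_group X x0 = {loop_class X x0 (\<lambda>t. x0)})
       \<and> (t0_space (whisker_topology X x0) \<longleftrightarrow> totally_separated_space (whisker_topology X x0))
       \<and> regular_space (whisker_topology X x0)"
proof -
  interpret wh X x0 using assms(3) by unfold_locales
  have reg: "regular_space W" using clopen_base_regular clopen_base by blast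
  have ts: "t0_space W \<Longrightarrow> totally_separated_space W" using clopen_base_t0_totsep clopen_base by blast
  have th: "totally_separated_space W \<Longrightarrow> Hausdorff_space W" by (rule totsep_Hausdorff)
  have ht: "Hausdorff_space W \<Longrightarrow> t1_space W" by (rule Hausdorff_imp_t1_space)
  have t10: "t1_space W \<Longrightarrow> t0_space W" by (rule t1_imp_t0_space)
  show ?thesis using reg ts th ht t10 t0_imp_small small_imp_t0 by blast
qed


end
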